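(* Let $Z_1,\dots,Z_d$ be nonzero complex numbers with $|Z_1|\le\cdots\le|Z_d|$, not all of the same modulus, let $R=\min\{|Z_{i+1}|/|Z_i| : |Z_{i+1}|>|Z_i|\}$ and $I=\{i: 1\le i\le d-1,\ |Z_i|<|Z_{i+1}|\}\cup\{0,d\}$. Then for every $i\in I$, \[ \sigma_{d-i}(Z)=Z_{i+1}Z_{i+2}\cdots Z_d\,(1+c) \] for some complex $c$ with $|c|\le\left(\binom{d}{i}-1\right)R^{-1}\le 2^dR^{-1}$.
   Context: $\sigma_k(Z)=\sum_{j_1<\dots<j_k}Z_{j_1}\cdots Z_{j_k}$ denotes the $k$-th elementary symmetric function of $Z=(Z_1,\dots,Z_d)$, with $\sigma_0=1$; an empty product equals $1$. *)

theory Defs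
  imports "HOL-Analysis.Analysis"
begin

definition esym :: "nat \<Rightarrow> nat \<Rightarrow> (nat \<Rightarrow> complex) \<Rightarrow> complex" where
  "esym d k Z = (\<Sum>S\<in>{S. S \<subseteq> {1..d} \<and> card S = k}. \<Prod>j\<in>S. Z j)"

definition gapR :: "nat \<Rightarrow> (nat \<Rightarrow> complex) \<Rightarrow> real" where
  "gapR d Z = Min {norm (Z (i+1)) / norm (Z i) | i. 1 \<le> i \<and> i \<le> d - 1 \<and> norm (Z i) < norm (Z (i+1))}"

definition jumpI :: "nat \<Rightarrow> (nat \<Rightarrow> complex) \<Rightarrow> nat set" where
  "jumpI d Z = {i. 1 \<le> i \<and> i \<le> d - 1 \<and> norm (Z i) < norm (Z (i+1))} \<union> {0, d}"

end

theory Submission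
  imports Defs
begin

lemma chain_mono:
  fixes Z :: "nat \<Rightarrow> complex"
  assumes mono: "\<And>i. 1 \<le> i \<Longrightarrow> i < d \<Longrightarrow> norm (Z i) \<le> norm (Z (i+1))"
  shows "1 \<le> a \<Longrightarrow> a \<le> b \<Longrightarrow> b \<le> d \<Longrightarrow> norm (Z a) \<le> norm (Z b)"
proof (induction b)
  case 0 then show ?case by simp
next
  case (Suc b)
  show ?case
  proof (cases "a = Suc b")
    case True then show ?thesis by simp
  next
    case False
    then have "norm (Z a) \<le> norm (Z b)" using Suc by simp
    also have "\<dots> \<le> norm (Z (Suc b))" using mono[of b] Suc False by simp
    finally show ?thesis .
  qed
qed

lemma exists_jump:
  fixes Z :: "nat \<Rightarrow> complex"
  assumes mono: "\<And>i. 1 \<le> i \<Longrightarrow> i < d \<Longrightarrow> norm (Z i) \<le> norm (Z (i+1))"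
    and notall: "\<exists>i\<in>{1..d}. \<exists>j\<in>{1..d}. norm (Z i) \<noteq> norm (Z j)"
  shows "\<exists>i. 1 \<le> i \<and> i \<le> d - 1 \<and> norm (Z i) < norm (Z (i+1))"
proof (rule ccontr)
  assume H: "\<not> ?thesis"
  have eq: "1 \<le> b \<Longrightarrow> b \<le> d \<Longrightarrow> norm (Z b) = norm (Z 1)" for b
  proof (induction b)
    case 0 then show ?case by simp
  next
    case (Suc b)
    show ?case
    proof (cases "b = 0")
      case True then show ?thesis by simp
    next
      case False
      then have "norm (Z b) = norm (Z 1)" using Suc by simp
      moreover have "norm (Z b) = norm (Z (Suc b))"
      proof -
        have "norm (Z b) \<le> norm (Z (b+1))" using mono[of b] False Suc.prems by simp
        moreover have "\<not> norm (Z b) < norm (Z (b+1))" using H False Suc.prems by auto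
        ultimately show ?thesis by simp
      qed
      ultimately show ?thesis by simp
    qed
  qed
  from notall obtain i j where "i \<in> {1..d}" "j \<in> {1..d}" "norm (Z i) \<noteq> norm (Z j)" by blast
  with eq[of i] eq[of j] show False by simp
qed

theorem mainTheorem3:
  fixes d :: nat and Z :: "nat \<Rightarrow> complex"
  assumes nz: "\<And>i. 1 \<le> i \<Longrightarrow> i \<le> d \<Longrightarrow> Z i \<noteq> 0"
    and mono: "\<And>i. 1 \<le> i \<Longrightarrow> i < d \<Longrightarrow> norm (Z i) \<le> norm (Z (i+1))"
    and notall: "\<exists>i\<in>{1..d}. \<exists>j\<in>{1..d}. norm (Z i) \<noteq> norm (Z j)"
  shows "\<forall>i\<in>jumpI d Z. \<exists>c::complex.
           esym d (d - i) Z = (\<Prod>j\<in>{i+1..d}. Z j) * (1 + c)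
         \<and> norm c \<le> (real (d choose i) - 1) / gapR d Z
         \<and> (real (d choose i) - 1) / gapR d Z \<le> 2 ^ d / gapR d Z"
proof
  fix i assume iI: "i \<in> jumpI d Z"
  define R where "R = gapR d Z"
  define G where "G = {norm (Z (i+1)) / norm (Z i) | i. 1 \<le> i \<and> i \<le> d - 1 \<and> norm (Z i) < norm (Z (i+1))}"
  have RG: "R = Min G" unfolding R_def G_def gapR_def by simp
  have Gfin: "finite G" unfolding G_def by simp
  have Gne: "G \<noteq> {}" using exists_jump[OF mono notall] unfolding G_def by blast
  have Ggt: "\<forall>x\<in>G. x > 1"
  proof
    fix x assume "x \<in> G"
    then obtain j where j: "x = norm (Z (j+1)) / norm (Z j)" "1 \<le> j" "j \<le> d - 1"
      "norm (Z j) < norm (Z (j+1))" unfolding G_def by blast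
    have "norm (Z j) > 0" using nz[of j] j by (cases d) auto
    then show "x > 1" using j by simp
  qed
  have R1: "R > 1" using RG Gfin Gne Ggt by simp
  have Rle: "R \<le> norm (Z (j+1)) / norm (Z j)" if "1 \<le> j" "j \<le> d - 1" "norm (Z j) < norm (Z (j+1))" for j
    unfolding RG using Gfin that by (intro Min_le) (auto simp: G_def)
  have id: "i \<le> d" using iI unfolding jumpI_def by auto
  define T where "T = {i+1..d}"
  define F where "F = {S. S \<subseteq> {1..d} \<and> card S = d - i}"
  have Tcard: "card T = d - i" unfolding T_def by simp
  have TF: "T \<in> F" unfolding F_def T_def using Tcard T_def by auto
  have Ffin: "finite F" unfolding F_def by simp
  have Fcard: "card F = d choose i"
    unfolding F_def using n_subsets[of "{1..d}" "d - i"] binomial_symmetric[OF id] by simp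
  have PT0: "(\<Prod>j\<in>T. Z j) \<noteq> 0" unfolding T_def using nz by (simp add: prod_zero_iff)
  have key: "norm (\<Prod>j\<in>S. Z j) \<le> norm (\<Prod>j\<in>T. Z j) / R" if SF: "S \<in> F - {T}" for S
  proof -
    have Ssub: "S \<subseteq> {1..d}" and Sc: "card S = d - i" using SF unfolding F_def by auto
    have Sfin: "finite S" using Ssub finite_subset by blast
    have Tfin: "finite T" unfolding T_def by simp
    have "S \<noteq> T" using SF by simp
    have nsub: "\<not> S \<subseteq> T"
      using card_subset_eq[OF Tfin _ ] Sc Tcard \<open>S \<noteq> T\<close> by metis
    define k where "k = card (S - T)"
    have k2: "card (T - S) = k" unfolding k_def
      using card_Diff_subset_Int[of S T] card_Diff_subset_Int[of T S] Sfin Tfin Sc Tcard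
      by (simp add: Int_commute)
    have kpos: "k \<ge> 1" unfolding k_def using nsub Sfin
      by (metis One_nat_def Suc_leI card_gt_0_iff finite_Diff Diff_eq_empty_iff)
    obtain a where a: "a \<in> S - T" using nsub by blast
    have a1: "1 \<le> a" "a \<le> i" using a Ssub unfolding T_def by auto
    have "T - S \<noteq> {}" using k2 kpos by (metis card.empty not_one_le_zero)
    then obtain b where b: "b \<in> T - S" by blast
    have b1: "i + 1 \<le> b" "b \<le> d" using b unfolding T_def by auto
    have ij: "1 \<le> i" "i \<le> d - 1" using a1 b1 by auto
    have jump: "norm (Z i) < norm (Z (i+1))"
      using iI ij unfolding jumpI_def by auto
    have Zi0: "norm (Z i) > 0" using nz[of i] ij by auto
    have RZ: "norm (Z i) * R \<le> norm (Z (i+1))"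
      using Rle[OF ij jump] Zi0 by (simp add: field_simps)
    have A: "norm (\<Prod>j\<in>S - T. Z j) \<le> norm (Z i) ^ k"
    proof -
      have "norm (\<Prod>j\<in>S - T. Z j) = (\<Prod>j\<in>S - T. norm (Z j))" by (simp add: prod_norm)
      also have "\<dots> \<le> (\<Prod>j\<in>S - T. norm (Z i))"
      proof (rule prod_mono)
        fix j assume "j \<in> S - T"
        then have "1 \<le> j" "j \<le> i" using Ssub unfolding T_def by auto
        then show "0 \<le> norm (Z j) \<and> norm (Z j) \<le> norm (Z i)"
          using chain_mono[where Z=Z and d=d, OF mono, of j i] ij by simp
      qed
      also have "\<dots> = norm (Z i) ^ k" unfolding k_def by simp
      finally show ?thesis .
    qed
    have B: "norm (Z (i+1)) ^ k \<le> norm (\<Prod>j\<in>T - S. Z j)"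
    proof -
      have "norm (Z (i+1)) ^ k = (\<Prod>j\<in>T - S. norm (Z (i+1)))" using k2 by simp
      also have "\<dots> \<le> (\<Prod>j\<in>T - S. norm (Z j))"
      proof (rule prod_mono)
        fix j assume "j \<in> T - S"
        then have "i+1 \<le> j" "j \<le> d" unfolding T_def by auto
        then show "0 \<le> norm (Z (i+1)) \<and> norm (Z (i+1)) \<le> norm (Z j)"
          using chain_mono[where Z=Z and d=d, OF mono, of "i+1" j] by simp
      qed
      also have "\<dots> = norm (\<Prod>j\<in>T - S. Z j)" by (simp add: prod_norm)
      finally show ?thesis .
    qed
    have "norm (Z i) ^ k * R \<le> norm (Z i) ^ k * R ^ k"
      using R1 kpos by (intro mult_left_mono) (auto intro: one_le_power simp: power_increasing[of 1 k R, simplified])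
    also have "\<dots> = (norm (Z i) * R) ^ k" by (simp add: power_mult_distrib)
    also have "\<dots> \<le> norm (Z (i+1)) ^ k" using RZ Zi0 R1 by (intro power_mono) auto
    finally have C: "norm (\<Prod>j\<in>S - T. Z j) * R \<le> norm (\<Prod>j\<in>T - S. Z j)"
      using A B R1 by (smt (verit) mult_right_mono)
    have eS: "(\<Prod>j\<in>S. Z j) = (\<Prod>j\<in>S \<inter> T. Z j) * (\<Prod>j\<in>S - T. Z j)"
      using Sfin by (rule prod.Int_Diff)
    have eT: "(\<Prod>j\<in>T. Z j) = (\<Prod>j\<in>S \<inter> T. Z j) * (\<Prod>j\<in>T - S. Z j)"
      using prod.Int_Diff[OF Tfin, of Z S] by (simp add: Int_commute)
    have "norm (\<Prod>j\<in>S. Z j) * R = norm (\<Prod>j\<in>S \<inter> T. Z j) * (norm (\<Prod>j\<in>S - T. Z j) * R)"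
      by (simp add: eS norm_mult)
    also have "\<dots> \<le> norm (\<Prod>j\<in>S \<inter> T. Z j) * norm (\<Prod>j\<in>T - S. Z j)"
      using C by (intro mult_left_mono) auto
    also have "\<dots> = norm (\<Prod>j\<in>T. Z j)" by (simp add: eT norm_mult)
    finally show ?thesis using R1 by (simp add: field_simps)
  qed
  define c where "c = (\<Sum>S\<in>F - {T}. \<Prod>j\<in>S. Z j) / (\<Prod>j\<in>T. Z j)"
  have es: "esym d (d - i) Z = (\<Prod>j\<in>T. Z j) + (\<Sum>S\<in>F - {T}. \<Prod>j\<in>S. Z j)"
    unfolding esym_def F_def[symmetric] using sum.remove[OF Ffin TF] by simp
  have e1: "esym d (d - i) Z = (\<Prod>j\<in>{i+1..d}. Z j) * (1 + c)"
    unfolding es c_def T_def[symmetric] using PT0 by (simp add: field_simps)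
  have "norm (\<Sum>S\<in>F - {T}. \<Prod>j\<in>S. Z j) \<le> (\<Sum>S\<in>F - {T}. norm (\<Prod>j\<in>S. Z j))"
    by (rule norm_sum)
  also have "\<dots> \<le> (\<Sum>S\<in>F - {T}. norm (\<Prod>j\<in>T. Z j) / R)"
    by (rule sum_mono) (rule key)
  also have "\<dots> = real (card F - 1) * (norm (\<Prod>j\<in>T. Z j) / R)"
    using Ffin TF by (simp add: card_Diff_singleton)
  finally have nb: "norm (\<Sum>S\<in>F - {T}. \<Prod>j\<in>S. Z j) \<le> real (card F - 1) * (norm (\<Prod>j\<in>T. Z j) / R)" .
  have cF: "card F \<ge> 1" using Ffin TF by (metis One_nat_def Suc_leI card_gt_0_iff empty_iff)
  have e2: "norm c \<le> (real (d choose i) - 1) / R"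
  proof -
    have "norm c = norm (\<Sum>S\<in>F - {T}. \<Prod>j\<in>S. Z j) / norm (\<Prod>j\<in>T. Z j)"
      unfolding c_def by (simp add: norm_divide)
    also have "\<dots> \<le> real (card F - 1) * (norm (\<Prod>j\<in>T. Z j) / R) / norm (\<Prod>j\<in>T. Z j)"
      using nb PT0 by (intro divide_right_mono) auto
    also have "\<dots> = real (card F - 1) / R" using PT0 by simp
    finally show ?thesis using cF Fcard by (simp add: of_nat_diff)
  qed
  have "real (d choose i) \<le> 2 ^ d"
    using binomial_le_pow2[of d i] by (metis of_nat_le_iff of_nat_numeral of_nat_power)
  then have "real (d choose i) - 1 \<le> 2 ^ d" by linarith
  then have e3: "(real (d choose i) - 1) / R \<le> 2 ^ d / R"
    using R1 by (metis divide_right_mono less_eq_real_def order.strict_trans zero_less_one)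
  show "\<exists>c::complex.
           esym d (d - i) Z = (\<Prod>j\<in>{i+1..d}. Z j) * (1 + c)
         \<and> norm c \<le> (real (d choose i) - 1) / gapR d Z
         \<and> (real (d choose i) - 1) / gapR d Z \<le> 2 ^ d / gapR d Z"
    using e1 e2 e3 unfolding R_def by blast
qed

end
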